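(* Let $L\ge2$ be an integer and $r\in[0,\frac{L}{L+1})$. There exists an integer $n(r,L)$ such that for every prime power $q$ and every $n\ge n(r,L)$ with $rn\in\mathbb{N}$, every linear $[n,k]_q$ code that is $(r,L)$ list-decodable satisfies $k\le n-\lceil\frac{L+1}{L}rn\rceil$.
   Context: A linear $[n,k]_q$ code is a $k$-dimensional subspace of $\mathbb{F}_q^n$. $B_t(v)$ is the Hamming ball of radius $t$ around $v$. A code $C$ is $(r,L)$ list-decodable if $|B_{rn}(v)\cap C|\le L$ for every $v\in\mathbb{F}_q^n$. *)

theory Defs
  imports "HOL-Algebra.Algebra"
begin

text \<open>Finite fields are represented as HOL-Algebra field records with carrier
  of type nat set (every finite field is isomorphic to such a one). Vectors of
  length n over F are functions nat => nat with entries in the carrier on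
  positions < n and zero elsewhere.\<close>

definition vecs :: "(nat, 'b) ring_scheme \<Rightarrow> nat \<Rightarrow> (nat \<Rightarrow> nat) set" where
  "vecs F n = {v. (\<forall>i<n. v i \<in> carrier F) \<and> (\<forall>i\<ge>n. v i = \<zero>\<^bsub>F\<^esub>)}"

definition vadd :: "(nat, 'b) ring_scheme \<Rightarrow> nat \<Rightarrow> (nat \<Rightarrow> nat) \<Rightarrow> (nat \<Rightarrow> nat) \<Rightarrow> (nat \<Rightarrow> nat)" where
  "vadd F n u v = (\<lambda>i. if i < n then u i \<oplus>\<^bsub>F\<^esub> v i else \<zero>\<^bsub>F\<^esub>)"

definition vsmult :: "(nat, 'b) ring_scheme \<Rightarrow> nat \<Rightarrow> nat \<Rightarrow> (nat \<Rightarrow> nat) \<Rightarrow> (nat \<Rightarrow> nat)" where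
  "vsmult F n a v = (\<lambda>i. if i < n then a \<otimes>\<^bsub>F\<^esub> v i else \<zero>\<^bsub>F\<^esub>)"

definition lincomb :: "(nat, 'b) ring_scheme \<Rightarrow> nat \<Rightarrow> nat \<Rightarrow> (nat \<Rightarrow> nat) \<Rightarrow> (nat \<Rightarrow> nat \<Rightarrow> nat) \<Rightarrow> (nat \<Rightarrow> nat)" where
  "lincomb F n k a b = (\<lambda>i. if i < n then finsum F (\<lambda>j. a j \<otimes>\<^bsub>F\<^esub> b j i) {..<k} else \<zero>\<^bsub>F\<^esub>)"

definition subspace_vecs :: "(nat, 'b) ring_scheme \<Rightarrow> nat \<Rightarrow> (nat \<Rightarrow> nat) set \<Rightarrow> bool" where
  "subspace_vecs F n C \<longleftrightarrow> C \<subseteq> vecs F n \<and> (\<lambda>i. \<zero>\<^bsub>F\<^esub>) \<in> C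
     \<and> (\<forall>u\<in>C. \<forall>v\<in>C. vadd F n u v \<in> C)
     \<and> (\<forall>a\<in>carrier F. \<forall>v\<in>C. vsmult F n a v \<in> C)"

text \<open>Linear [n,k]_q code: a subspace of F^n having a basis b_0..b_{k-1}, i.e.
  every codeword is a unique F-linear combination of the b_j.\<close>
definition linear_code :: "(nat, 'b) ring_scheme \<Rightarrow> nat \<Rightarrow> nat \<Rightarrow> (nat \<Rightarrow> nat) set \<Rightarrow> bool" where
  "linear_code F n k C \<longleftrightarrow> subspace_vecs F n C \<and>
     (\<exists>b. (\<forall>j<k. b j \<in> C) \<and>
          bij_betw (\<lambda>a. lincomb F n k a b)
                   {a. (\<forall>j<k. a j \<in> carrier F) \<and> (\<forall>j\<ge>k. a j = \<zero>\<^bsub>F\<^esub>)} C)"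

definition hamming_dist :: "nat \<Rightarrow> (nat \<Rightarrow> nat) \<Rightarrow> (nat \<Rightarrow> nat) \<Rightarrow> nat" where
  "hamming_dist n u v = card {i. i < n \<and> u i \<noteq> v i}"

definition hamming_ball :: "(nat, 'b) ring_scheme \<Rightarrow> nat \<Rightarrow> real \<Rightarrow> (nat \<Rightarrow> nat) \<Rightarrow> (nat \<Rightarrow> nat) set" where
  "hamming_ball F n t v = {u \<in> vecs F n. real (hamming_dist n u v) \<le> t}"

definition list_decodable :: "(nat, 'b) ring_scheme \<Rightarrow> nat \<Rightarrow> real \<Rightarrow> nat \<Rightarrow> (nat \<Rightarrow> nat) set \<Rightarrow> bool" where
  "list_decodable F n r L C \<longleftrightarrow>
     (\<forall>v\<in>vecs F n. card (hamming_ball F n (r * real n) v \<inter> C) \<le> L)"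

end

theory Submission
  imports Defs "HOL-Library.FuncSet"
begin

lemma funset_card:
  fixes S :: "nat set" and Y :: "nat set"
  assumes "finite S" "finite Y"
  shows "finite {f::nat\<Rightarrow>nat. (\<forall>i\<in>S. f i \<in> Y) \<and> (\<forall>i. i \<notin> S \<longrightarrow> f i = z)}"
    "card {f::nat\<Rightarrow>nat. (\<forall>i\<in>S. f i \<in> Y) \<and> (\<forall>i. i \<notin> S \<longrightarrow> f i = z)} = card Y ^ card S"
proof -
  let ?M = "{f::nat\<Rightarrow>nat. (\<forall>i\<in>S. f i \<in> Y) \<and> (\<forall>i. i \<notin> S \<longrightarrow> f i = z)}"
  have b: "bij_betw (\<lambda>f i. if i \<in> S then f i else z) (PiE S (\<lambda>_. Y)) ?M"
  proof (rule bij_betwI[where g="\<lambda>f. restrict f S"])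
    show "(\<lambda>f i. if i \<in> S then f i else z) \<in> PiE S (\<lambda>_. Y) \<rightarrow> ?M" by auto
    show "(\<lambda>f. restrict f S) \<in> ?M \<rightarrow> PiE S (\<lambda>_. Y)" by auto
    show "restrict (\<lambda>i. if i \<in> S then f i else z) S = f" if "f \<in> PiE S (\<lambda>_. Y)" for f
      using that by (auto simp: fun_eq_iff PiE_def extensional_def)
    show "(\<lambda>i. if i \<in> S then restrict f S i else z) = f" if "f \<in> ?M" for f
      using that by (auto simp: fun_eq_iff)
  qed
  have fP: "finite (PiE S (\<lambda>_. Y))" using assms by (simp add: finite_PiE)
  show "finite ?M" using bij_betw_finite[OF b] fP by simp
  show "card ?M = card Y ^ card S" using bij_betw_same_card[OF b] assms by (simp add: card_PiE)
qed

lemma arith_b2: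
  fixes L N d J t q :: nat
  assumes q: "q \<le> L" "1 \<le> q" and L: "1 \<le> L" and NL: "L \<le> N" and N: "2 * L^3 \<le> N"
    and d: "2 * L^2 * J \<le> d" and J: "1 \<le> J" and t: "L * d + 1 \<le> (L + 1) * t"
    and main: "q * ((N - L) * (t + 1)) \<le> (d + J) * ((q - 1) * N)"
  shows False
proof -
  have Lq: "L * (q - 1) \<le> (L - 1) * q" using q by (simp add: algebra_simps diff_mult_distrib diff_mult_distrib2)
  have "q * (L * ((N - L) * (t + 1))) = L * (q * ((N - L) * (t + 1)))" by (simp add: algebra_simps)
  also have "\<dots> \<le> L * ((d + J) * ((q - 1) * N))" using main by simp
  also have "\<dots> = (L * (q - 1)) * ((d + J) * N)" by (simp only: ac_simps)
  also have "\<dots> \<le> ((L - 1) * q) * ((d + J) * N)" using Lq by (rule mult_right_mono) simp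
  also have "\<dots> = q * ((L - 1) * (d + J) * N)" by (simp only: ac_simps)
  finally have h1: "L * ((N - L) * (t + 1)) \<le> (L - 1) * (d + J) * N" using q by simp
  have "L * (N - L) * (L * d) \<le> L * (N - L) * ((L + 1) * (t + 1))"
    using t by (intro mult_left_mono) (auto simp: algebra_simps)
  also have "\<dots> = (L + 1) * (L * ((N - L) * (t + 1)))" by (simp only: ac_simps)
  also have "\<dots> \<le> (L + 1) * ((L - 1) * (d + J) * N)" using h1 by (rule mult_left_mono) simp
  finally have h2: "L * (N - L) * (L * d) \<le> (L + 1) * ((L - 1) * (d + J) * N)" .
  define l where "l = int L"
  define m where "m = int N"
  define e where "e = int d"
  define j where "j = int J"
  have h2': "l * (m - l) * (l * e) \<le> (l + 1) * ((l - 1) * (e + j) * m)"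
  proof -
    have "int (L * (N - L) * (L * d)) \<le> int ((L + 1) * ((L - 1) * (d + J) * N))" using h2 by (simp only: of_nat_le_iff)
    then show ?thesis unfolding l_def m_def e_def j_def
      by (simp only: of_nat_mult of_nat_add of_nat_diff[OF NL] of_nat_diff[OF L] of_nat_1)
  qed
  then have h3: "e * m \<le> l^3 * e + (l^2 - 1) * j * m" by (simp add: algebra_simps power2_eq_square power3_eq_cube)
  have N': "2 * l^3 \<le> m" using N unfolding l_def m_def by (simp flip: of_nat_power of_nat_mult)
  have "2 * l^3 * e \<le> m * e" using N' unfolding e_def by (intro mult_right_mono) auto
  then have "e * m \<le> 2 * (l^2 - 1) * j * m" using h3 by (simp add: algebra_simps)
  moreover have "m > 0" using N L unfolding m_def l_def by (simp add: le_less_trans[of _ 0] ) (metis One_nat_def Suc_le_eq le_trans mult_le_mono nat_mult_1 one_le_numeral one_le_power zero_less_iff_neq_zero) 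
  ultimately have "e \<le> 2 * (l^2 - 1) * j" by (simp add: mult_le_cancel_right)
  moreover have "2 * l^2 * j \<le> e"
  proof -
    have "int (2 * L^2 * J) \<le> int d" using d by (simp only: of_nat_le_iff)
    then show ?thesis unfolding l_def j_def e_def by (simp only: of_nat_mult of_nat_power of_nat_numeral)
  qed
  moreover have "j \<ge> 1" using J unfolding j_def by simp
  ultimately show False by (simp add: algebra_simps)
qed

lemma card_filter_sum: "finite A \<Longrightarrow> card {x\<in>A. P x} = (\<Sum>x\<in>A. if P x then 1 else 0)"
  using sum.inter_filter[of A "\<lambda>_. 1::nat" P] by simp

lemma arith_II:
  fixes Z W d t L :: nat
  assumes ZW: "Z + W = d + 2" and Z1: "1 \<le> Z" and Wt: "t + 1 \<le> W" and L: "1 \<le> L"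
    and t: "L * d + 1 \<le> (L + 1) * t" and dL: "L^2 \<le> d"
  shows "\<not> W \<le> (L - 1) * (d + 1 - t)"
    and "L * (W - 1 - t) \<le> W - L"
    and "Z + L * (W - 1 - t) \<le> t"
    and "(L - 1) + ((W - L) - (W - 1 - t)) \<le> t"
proof -
  define l where "l = int L"
  define z where "z = int Z"
  define w where "w = int W"
  define e where "e = int d"
  define s where "s = int t"
  have zw: "z + w = e + 2" using ZW unfolding z_def w_def e_def by simp
  have z1: "1 \<le> z" using Z1 unfolding z_def by simp
  have wt: "s + 1 \<le> w" using Wt unfolding s_def w_def by simp
  have l1: "1 \<le> l" using L unfolding l_def by simp
  have ti: "l * e + 1 \<le> (l + 1) * s" using t unfolding l_def e_def s_def
    by (metis (mono_tags, lifting) of_nat_1 of_nat_add of_nat_le_iff of_nat_mult)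
  have dl: "l * l \<le> e" using dL unfolding l_def e_def by (metis of_nat_le_iff of_nat_mult power2_eq_square)
  have s0: "0 \<le> s" unfolding s_def by simp
  have e0: "0 \<le> e" unfolding e_def by simp
  have A1: "(l - 1) * (e + 1) \<le> l * s"
  proof -
    have "(l + 1) * ((l - 1) * (e + 1)) = l*l*e + l*l - e - 1" by (simp add: algebra_simps)
    also have "\<dots> \<le> l * (l * e + 1)" using dl l1 by (simp add: algebra_simps)
    also have "\<dots> \<le> l * ((l + 1) * s)" using ti l1 by (intro mult_left_mono) auto
    also have "\<dots> = (l + 1) * (l * s)" by (simp add: algebra_simps)
    finally show ?thesis using l1 by (simp add: mult_le_cancel_left)
  qed
  have wd: "w \<le> e + 1" using zw z1 by simp
  have m1: "(l - 1) * w \<le> (l - 1) * (e + 1)" using wd l1 by (intro mult_left_mono) auto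
  have "d + 1 - t = nat (e + 1 - s)" using Wt ZW Z1 unfolding e_def s_def by auto
  show "\<not> W \<le> (L - 1) * (d + 1 - t)"
  proof
    assume h: "W \<le> (L - 1) * (d + 1 - t)"
    have "t \<le> d" using Wt ZW Z1 by simp
    then have "int W \<le> int ((L - 1) * (d + 1 - t))" using h by (simp only: of_nat_le_iff)
    moreover have "int ((L - 1) * (d + 1 - t)) = (l - 1) * (e + 1 - s)" unfolding l_def e_def s_def
      using L \<open>t \<le> d\<close> by (simp add: of_nat_diff)
    ultimately have "w \<le> (l - 1) * (e + 1 - s)" unfolding w_def by simp
    then have "w \<le> (l - 1) * (e + 1) - (l - 1) * s" by (simp add: algebra_simps)
    then show False using A1 wt by (simp add: algebra_simps)
  qed
  have W1: "1 + t \<le> W" using Wt by simp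
  have e1: "int (W - 1 - t) = w - 1 - s" using W1 unfolding w_def s_def by (simp add: of_nat_diff)
  have WL: "L \<le> W"
  proof (rule ccontr)
    assume "\<not> L \<le> W"
    then have "int W < int L" by simp
    then have wl: "w < l" unfolding l_def w_def .
    have "(l - 1) * w \<le> l * s" using m1 A1 by linarith
    have "(l - 1) * (s + 1) \<le> (l - 1) * w" using wt l1 by (intro mult_left_mono) auto
    then have "l * s + l - s - 1 \<le> l * s" using m1 A1 by (simp add: algebra_simps)
    then show False using wl wt by linarith
  qed
  show "L * (W - 1 - t) \<le> W - L"
  proof -
    have "l * (w - 1 - s) \<le> w - l"
    proof -
      have "l * (w - 1 - s) = (l - 1) * w + w - l - l * s" by (simp add: algebra_simps)
      then show ?thesis using m1 A1 by linarith
    qed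
    moreover have "int (L * (W - 1 - t)) = l * (w - 1 - s)" unfolding l_def by (simp only: of_nat_mult e1)
    moreover have "int (W - L) = w - l" unfolding l_def w_def using WL by (simp add: of_nat_diff)
    ultimately have "int (L * (W - 1 - t)) \<le> int (W - L)" by simp
    then show ?thesis by (simp only: of_nat_le_iff)
  qed
  show "Z + L * (W - 1 - t) \<le> t"
  proof -
    have "z + l * (w - 1 - s) \<le> s"
    proof -
      have "z + l * (w - 1 - s) = (e + 2 - w) + (l - 1) * w + w - l - l * s" using zw by (simp add: algebra_simps)
      moreover have "(l - 1) * (e + 1) = l * e + l - e - 1" by (simp add: algebra_simps)
      moreover have "(l + 1) * s = l * s + s" by (simp add: algebra_simps)
      ultimately show ?thesis using m1 ti by linarith
    qed
    moreover have "int (Z + L * (W - 1 - t)) = z + l * (w - 1 - s)" unfolding l_def z_def by (simp only: of_nat_mult of_nat_add e1)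
    ultimately have "int (Z + L * (W - 1 - t)) \<le> int t" unfolding s_def by simp
    then show ?thesis by (simp only: of_nat_le_iff)
  qed
  have "L \<le> t + 1"
  proof -
    have "l * (l * l) \<le> l * e" using dl l1 by (intro mult_left_mono) auto
    moreover have "l * l \<le> l * (l * l)" using l1 by (intro mult_left_mono) (auto simp: mult_le_cancel_left1)
    ultimately have "(l + 1) * (l - 1) \<le> (l + 1) * s" using ti by (simp add: algebra_simps)
    then have "l - 1 \<le> s" using l1 by (simp add: mult_le_cancel_left)
    then show ?thesis unfolding l_def s_def by simp
  qed
  then show "(L - 1) + ((W - L) - (W - 1 - t)) \<le> t" using WL W1 L by linarith
qed

locale lcode = field R for R :: "(nat, 'b) ring_scheme" (structure) +
  fixes n k :: nat and C :: "(nat \<Rightarrow> nat) set"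
  assumes fin: "finite (carrier R)" and lc: "linear_code R n k C"
begin

abbreviation "q \<equiv> card (carrier R)"

lemma vecs_eq: "vecs R n = {f. (\<forall>i\<in>{..<n}. f i \<in> carrier R) \<and> (\<forall>i. i \<notin> {..<n} \<longrightarrow> f i = \<zero>)}"
  unfolding vecs_def by auto

lemma vecs_finite: "finite (vecs R n)" and vecs_card: "card (vecs R n) = q ^ n"
  using funset_card[of "{..<n}" "carrier R" \<zero>] fin unfolding vecs_eq by auto

lemma q_ge2: "q \<ge> 2"
proof -
  have "{\<zero>, \<one>} \<subseteq> carrier R" by auto
  then have "card {\<zero>, \<one>} \<le> q" using fin by (rule card_mono[rotated])
  moreover have "card {\<zero>, \<one>} = 2" using zero_not_one by simp
  ultimately show ?thesis by simp
qed

lemma sub: "subspace_vecs R n C" using lc unfolding linear_code_def by simp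
lemma C_vecs: "C \<subseteq> vecs R n" using sub unfolding subspace_vecs_def by simp
lemma C_zero: "(\<lambda>i. \<zero>) \<in> C" using sub unfolding subspace_vecs_def by simp
lemma C_add: "u \<in> C \<Longrightarrow> v \<in> C \<Longrightarrow> vadd R n u v \<in> C" using sub unfolding subspace_vecs_def by simp
lemma C_smult: "a \<in> carrier R \<Longrightarrow> v \<in> C \<Longrightarrow> vsmult R n a v \<in> C" using sub unfolding subspace_vecs_def by simp
lemma C_finite: "finite C" using C_vecs vecs_finite by (rule finite_subset)

lemma C_card: "card C = q ^ k"
proof -
  obtain b where "bij_betw (\<lambda>a. lincomb R n k a b) {a. (\<forall>j<k. a j \<in> carrier R) \<and> (\<forall>j\<ge>k. a j = \<zero>)} C"
    using lc unfolding linear_code_def by blast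
  then have "card C = card {a. (\<forall>j<k. a j \<in> carrier R) \<and> (\<forall>j\<ge>k. a j = \<zero>)}"
    by (rule bij_betw_same_card[symmetric])
  also have "{a. (\<forall>j<k. a j \<in> carrier R) \<and> (\<forall>j\<ge>k. a j = \<zero>)} = {f. (\<forall>i\<in>{..<k}. f i \<in> carrier R) \<and> (\<forall>i. i \<notin> {..<k} \<longrightarrow> f i = \<zero>)}"
    by (auto simp: not_less)
  finally show ?thesis using funset_card[of "{..<k}" "carrier R" \<zero>] fin by simp
qed

lemma k_le_n: "k \<le> n"
proof -
  have "q ^ k \<le> q ^ n" unfolding C_card[symmetric] vecs_card[symmetric] using C_vecs vecs_finite by (rule card_mono[rotated])
  then show ?thesis using q_ge2 by (simp add: power_le_imp_le_exp)
qed


definition vdiff :: "(nat \<Rightarrow> nat) \<Rightarrow> (nat \<Rightarrow> nat) \<Rightarrow> (nat \<Rightarrow> nat)" where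
  "vdiff u w = (\<lambda>i. if i < n then u i \<ominus> w i else \<zero>)"

lemma vecs_carr: "u \<in> vecs R n \<Longrightarrow> u i \<in> carrier R"
  unfolding vecs_def by (cases "i < n") auto

lemma vecs_ge: "u \<in> vecs R n \<Longrightarrow> n \<le> i \<Longrightarrow> u i = \<zero>"
  unfolding vecs_def by auto

lemma C_carr: "u \<in> C \<Longrightarrow> u i \<in> carrier R"
  using C_vecs vecs_carr by blast

lemma C_diff: assumes "u \<in> C" "w \<in> C" shows "vdiff u w \<in> C"
proof -
  have "vdiff u w = vadd R n u (vsmult R n (\<ominus> \<one>) w)"
  proof
    fix i
    have "u i \<in> carrier R" "w i \<in> carrier R" using assms C_carr by auto
    then show "vdiff u w i = vadd R n u (vsmult R n (\<ominus> \<one>) w) i"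
      unfolding vdiff_def vadd_def vsmult_def by (simp add: minus_eq l_minus)
  qed
  then show ?thesis using assms C_add C_smult by simp
qed

lemma vdiff_cancel:
  assumes "u \<in> vecs R n" "u' \<in> vecs R n" "s \<in> vecs R n" "vdiff u s = vdiff u' s"
  shows "u = u'"
proof
  fix i
  show "u i = u' i"
  proof (cases "i < n")
    case True
    then have "u i \<ominus> s i = u' i \<ominus> s i" using assms(4) unfolding vdiff_def by meson
    moreover have "u i \<in> carrier R" "u' i \<in> carrier R" "s i \<in> carrier R" using assms vecs_carr by auto
    ultimately show ?thesis by (metis a_minus_def add.m_closed add.inv_closed add.r_cancel)
  next
    case False then show ?thesis using vecs_ge[OF assms(1)] vecs_ge[OF assms(2)] by simp
  qed
qed

lemma count_vanish:
  assumes E: "E \<subseteq> vecs R n" and cl: "\<And>u w. u \<in> E \<Longrightarrow> w \<in> E \<Longrightarrow> vdiff u w \<in> E"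
    and S: "finite S"
  shows "card E \<le> q ^ card S * card {c\<in>E. \<forall>i\<in>S. c i = \<zero>}"
proof -
  define \<phi> where "\<phi> c = (\<lambda>i. if i \<in> S then c i else \<zero>)" for c :: "nat \<Rightarrow> nat"
  define K where "K = {c\<in>E. \<forall>i\<in>S. c i = \<zero>}"
  define M where "M = {f::nat\<Rightarrow>nat. (\<forall>i\<in>S. f i \<in> carrier R) \<and> (\<forall>i. i \<notin> S \<longrightarrow> f i = \<zero>)}"
  define rep where "rep y = (SOME c. c \<in> E \<and> \<phi> c = y)" for y
  define \<psi> where "\<psi> c = (\<phi> c, vdiff c (rep (\<phi> c)))" for c
  have fE: "finite E" using E vecs_finite finite_subset by blast
  have fM: "finite M" "card M = q ^ card S" unfolding M_def using funset_card[OF S fin] by auto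
  have im: "\<phi> ` E \<subseteq> M"
  proof
    fix y assume "y \<in> \<phi> ` E"
    then obtain c where c: "c \<in> E" "y = \<phi> c" by blast
    then show "y \<in> M" unfolding M_def \<phi>_def using E vecs_carr by auto
  qed
  have rep: "rep (\<phi> c) \<in> E \<and> \<phi> (rep (\<phi> c)) = \<phi> c" if "c \<in> E" for c
    unfolding rep_def by (rule someI[of _ c]) (use that in simp)
  have inj: "inj_on \<psi> E"
  proof (rule inj_onI)
    fix c c' assume c: "c \<in> E" "c' \<in> E" "\<psi> c = \<psi> c'"
    then have e1: "\<phi> c = \<phi> c'" and e2: "vdiff c (rep (\<phi> c)) = vdiff c' (rep (\<phi> c'))"
      unfolding \<psi>_def by auto
    from e2 have "vdiff c (rep (\<phi> c)) = vdiff c' (rep (\<phi> c))" by (simp add: e1)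
    then show "c = c'" using vdiff_cancel c E rep[OF c(1)] by blast
  qed
  have sub: "\<psi> ` E \<subseteq> \<phi> ` E \<times> K"
  proof
    fix z assume "z \<in> \<psi> ` E"
    then obtain c where c: "c \<in> E" "z = \<psi> c" by blast
    have r: "rep (\<phi> c) \<in> E" "\<phi> (rep (\<phi> c)) = \<phi> c" using rep[OF c(1)] by auto
    have "vdiff c (rep (\<phi> c)) \<in> K"
    proof -
      have "vdiff c (rep (\<phi> c)) i = \<zero>" if "i \<in> S" for i
      proof -
        have "rep (\<phi> c) i = c i" using r(2) that unfolding \<phi>_def by meson
        moreover have "c i \<in> carrier R" using c E vecs_carr by blast
        ultimately show ?thesis unfolding vdiff_def by (simp add: a_minus_def r_neg)
      qed
      then show ?thesis unfolding K_def using cl c(1) r(1) by blast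
    qed
    then show "z \<in> \<phi> ` E \<times> K" using c unfolding \<psi>_def by blast
  qed
  have fK: "finite K" unfolding K_def using fE by simp
  have "card E = card (\<psi> ` E)" using inj by (simp add: card_image)
  also have "\<dots> \<le> card (\<phi> ` E \<times> K)" using sub fK fE by (intro card_mono) auto
  also have "\<dots> = card (\<phi> ` E) * card K" by (simp add: card_cartesian_product)
  also have "\<dots> \<le> q ^ card S * card K" using card_mono[OF fM(1) im] fM(2) by simp
  finally show ?thesis unfolding K_def .
qed


definition VC :: "nat \<Rightarrow> (nat \<Rightarrow> nat) set" where
  "VC s = {c\<in>C. \<forall>i\<in>{..<s}. c i = \<zero>}"

lemma VC_sub: "VC s \<subseteq> C" unfolding VC_def by auto

lemma VC_diff: assumes "u \<in> VC s" "w \<in> VC s" shows "vdiff u w \<in> VC s"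
proof -
  have "u \<in> C" "w \<in> C" using assms unfolding VC_def by auto
  then have "vdiff u w \<in> C" by (rule C_diff)
  moreover have "vdiff u w i = \<zero>" if "i < s" for i
    using assms that unfolding VC_def vdiff_def by simp
  ultimately show ?thesis unfolding VC_def by simp
qed

lemma VC_card: assumes "s \<le> k" shows "q ^ (k - s) \<le> card (VC s)"
proof -
  have cl: "\<And>u w. u \<in> C \<Longrightarrow> w \<in> C \<Longrightarrow> vdiff u w \<in> C" by (rule C_diff)
  have "q ^ k \<le> q ^ card {..<s} * card (VC s)"
    using count_vanish[OF C_vecs cl, of "{..<s}"] C_card unfolding VC_def by simp
  then have "q ^ s * q ^ (k - s) \<le> q ^ s * card (VC s)"
    using assms by (simp add: power_add[symmetric])
  then show ?thesis using q_ge2 by simp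
qed

lemma zero_vecs: "(\<lambda>i. \<zero>) \<in> vecs R n" unfolding vecs_def by simp

definition bad :: "nat \<Rightarrow> nat \<Rightarrow> bool" where
  "bad L t \<longleftrightarrow> (\<exists>S v. S \<subseteq> C \<and> card S = L + 1 \<and> v \<in> vecs R n \<and> (\<forall>c\<in>S. hamming_dist n c v \<le> t))"

lemma bad_not_ld:
  assumes "bad L t" "real t \<le> r * real n"
  shows "\<not> list_decodable R n r L C"
proof
  assume ld: "list_decodable R n r L C"
  obtain S v where S: "S \<subseteq> C" "card S = L + 1" "v \<in> vecs R n" "\<forall>c\<in>S. hamming_dist n c v \<le> t"
    using assms(1) unfolding bad_def by blast
  have "S \<subseteq> hamming_ball R n (r * real n) v \<inter> C"
  proof
    fix c assume c: "c \<in> S"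
    then have "hamming_dist n c v \<le> t" using S(4) by blast
    then have "real (hamming_dist n c v) \<le> real t" by simp
    then have "real (hamming_dist n c v) \<le> r * real n" using assms(2) by linarith
    then show "c \<in> hamming_ball R n (r * real n) v \<inter> C"
      using c S(1) C_vecs unfolding hamming_ball_def by auto
  qed
  then have "card S \<le> card (hamming_ball R n (r * real n) v \<inter> C)"
    using C_finite by (intro card_mono) auto
  moreover have "card (hamming_ball R n (r * real n) v \<inter> C) \<le> L" using ld S(3) unfolding list_decodable_def by blast
  ultimately show False using S(2) by simp
qed

lemma wt_sub: assumes "c \<in> VC s" shows "hamming_dist n c (\<lambda>i. \<zero>) \<le> n - s"
proof -
  have "{i. i < n \<and> c i \<noteq> \<zero>} \<subseteq> {s..<n}" using assms unfolding VC_def by auto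
  then have "card {i. i < n \<and> c i \<noteq> \<zero>} \<le> card {s..<n}" by (intro card_mono) auto
  then show ?thesis unfolding hamming_dist_def by simp
qed

lemma case_a:
  assumes "L \<le> k" "n - k + L \<le> t" "L + 1 \<le> 2 ^ L"
  shows "bad L t"
proof -
  have "2 ^ L \<le> q ^ L" using q_ge2 by (simp add: power_mono)
  moreover have "q ^ (k - (k - L)) \<le> card (VC (k - L))" by (rule VC_card) simp
  ultimately have "L + 1 \<le> card (VC (k - L))" using assms by simp
  then obtain S where S: "S \<subseteq> VC (k - L)" "card S = L + 1" by (meson obtain_subset_with_card_n)
  have "\<forall>c\<in>S. hamming_dist n c (\<lambda>i. \<zero>) \<le> t"
  proof
    fix c assume "c \<in> S"
    then have "hamming_dist n c (\<lambda>i. \<zero>) \<le> n - (k - L)" using S wt_sub by blast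
    then show "hamming_dist n c (\<lambda>i. \<zero>) \<le> t" using assms k_le_n by linarith
  qed
  then show ?thesis unfolding bad_def using S VC_sub zero_vecs by blast
qed

lemma case_I:
  assumes q: "L + 1 \<le> q" and c: "c \<in> C" "c \<noteq> (\<lambda>i. \<zero>)" and w: "hamming_dist n c (\<lambda>i. \<zero>) \<le> t"
  shows "bad L t"
proof -
  have "card (carrier R - {\<zero>}) = q - 1" using fin by (simp add: card_Diff_singleton)
  then have "L \<le> card (carrier R - {\<zero>})" using q by simp
  then obtain \<Lambda> where La: "\<Lambda> \<subseteq> carrier R - {\<zero>}" "card \<Lambda> = L" by (meson obtain_subset_with_card_n)
  obtain i0 where i0: "c i0 \<noteq> \<zero>" using c(2) by auto
  have i0n: "i0 < n" using i0 c(1) C_vecs vecs_ge by (meson not_le subsetD)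
  have ci0: "c i0 \<in> carrier R" using c(1) C_carr by blast
  define y where "y a = vsmult R n a c" for a
  have inj: "inj_on y \<Lambda>"
  proof (rule inj_onI)
    fix a b assume ab: "a \<in> \<Lambda>" "b \<in> \<Lambda>" "y a = y b"
    then have "a \<otimes> c i0 = b \<otimes> c i0" unfolding y_def vsmult_def using i0n by meson
    then show "a = b" using m_rcancel[OF i0 ci0] ab La(1) by blast
  qed
  have nz: "(\<lambda>i. \<zero>) \<notin> y ` \<Lambda>"
  proof
    assume "(\<lambda>i. \<zero>) \<in> y ` \<Lambda>"
    then obtain a where a: "a \<in> \<Lambda>" "(\<lambda>i. \<zero>) = y a" by blast
    have "(\<lambda>i. \<zero>) i0 = y a i0" using fun_cong[OF a(2), of i0] by simp
    then have "a \<otimes> c i0 = \<zero>" unfolding y_def vsmult_def using i0n by simp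
    then show False using integral_iff[of a "c i0"] a La(1) i0 ci0 by blast
  qed
  define S where "S = insert (\<lambda>i. \<zero>) (y ` \<Lambda>)"
  have "finite \<Lambda>" using La fin finite_subset by blast
  then have cS: "card S = L + 1" unfolding S_def using nz inj La(2) by (simp add: card_image)
  have SC: "S \<subseteq> C" unfolding S_def y_def using C_zero C_smult c(1) La(1) by blast
  have "\<forall>x\<in>S. hamming_dist n x (\<lambda>i. \<zero>) \<le> t"
  proof
    fix x assume "x \<in> S"
    then consider "x = (\<lambda>i. \<zero>)" | a where "a \<in> \<Lambda>" "x = y a" unfolding S_def by blast
    then show "hamming_dist n x (\<lambda>i. \<zero>) \<le> t"
    proof cases
      case 1 then show ?thesis unfolding hamming_dist_def by simp
    next
      case 2
      have "{i. i < n \<and> x i \<noteq> \<zero>} \<subseteq> {i. i < n \<and> c i \<noteq> \<zero>}"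
        using 2 unfolding y_def vsmult_def using La(1) by auto
      then have "card {i. i < n \<and> x i \<noteq> \<zero>} \<le> card {i. i < n \<and> c i \<noteq> \<zero>}" by (intro card_mono) auto
      then show ?thesis using w unfolding hamming_dist_def by simp
    qed
  qed
  then show ?thesis unfolding bad_def using cS SC zero_vecs by blast
qed


lemma case_b2:
  assumes q: "q \<le> L" and Jk: "J \<le> k" and L: "1 \<le> L" and N0: "2 * L^3 \<le> 2^J"
    and d: "2 * L^2 * J \<le> n - k" and J: "1 \<le> J" and t: "L * (n - k) + 1 \<le> (L + 1) * t"
  shows "bad L t"
proof -
  define E where "E = VC (k - J)"
  define T where "T = {k - J..<n}"
  define N where "N = card E"
  define w where "w c = hamming_dist n c (\<lambda>i. \<zero>)" for c
  have EC: "E \<subseteq> C" unfolding E_def by (rule VC_sub)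
  have fE: "finite E" using EC C_finite finite_subset by blast
  have "q ^ (k - (k - J)) \<le> N" unfolding N_def E_def by (rule VC_card) simp
  then have "q ^ J \<le> N" using Jk by simp
  moreover have "2 ^ J \<le> q ^ J" using q_ge2 by (simp add: power_mono)
  ultimately have NJ: "2 ^ J \<le> N" by simp
  have cT: "card T = n - k + J" unfolding T_def using k_le_n Jk by simp
  have fT: "finite T" unfolding T_def by simp
  have wE: "w c = card {i\<in>T. c i \<noteq> \<zero>}" if "c \<in> E" for c
  proof -
    have "{i. i < n \<and> c i \<noteq> \<zero>} = {i\<in>T. c i \<noteq> \<zero>}"
      using that unfolding E_def VC_def T_def by (auto simp: not_less)
    then show ?thesis unfolding w_def hamming_dist_def by simp
  qed
  have col: "q * card {c\<in>E. c i \<noteq> \<zero>} \<le> (q - 1) * N" for i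
  proof -
    have Ev: "E \<subseteq> vecs R n" using EC C_vecs by blast
    have cl: "\<And>u v. u \<in> E \<Longrightarrow> v \<in> E \<Longrightarrow> vdiff u v \<in> E" unfolding E_def by (rule VC_diff)
    have "N \<le> q ^ card {i} * card {c\<in>E. \<forall>j\<in>{i}. c j = \<zero>}"
      unfolding N_def by (rule count_vanish[where E=E and S="{i}"]) (fact Ev, erule (1) cl, simp)
    then have z: "N \<le> q * card {c\<in>E. c i = \<zero>}" by simp
    have "{c\<in>E. c i \<noteq> \<zero>} = E - {c\<in>E. c i = \<zero>}" by auto
    then have "card {c\<in>E. c i \<noteq> \<zero>} = N - card {c\<in>E. c i = \<zero>}"
      unfolding N_def using fE by (simp add: card_Diff_subset)
    then have "q * card {c\<in>E. c i \<noteq> \<zero>} = q * N - q * card {c\<in>E. c i = \<zero>}"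
      by (simp add: diff_mult_distrib2)
    also have "\<dots> \<le> q * N - N" using z by simp
    also have "\<dots> = (q - 1) * N" by (simp add: diff_mult_distrib)
    finally show ?thesis .
  qed
  have swap: "(\<Sum>c\<in>E. w c) = (\<Sum>i\<in>T. card {c\<in>E. c i \<noteq> \<zero>})"
  proof -
    have "(\<Sum>c\<in>E. w c) = (\<Sum>c\<in>E. \<Sum>i\<in>T. if c i \<noteq> \<zero> then 1 else 0)"
      using wE fT by (intro sum.cong) (auto simp: card_filter_sum)
    also have "\<dots> = (\<Sum>i\<in>T. \<Sum>c\<in>E. if c i \<noteq> \<zero> then 1 else 0)" by (rule sum.swap)
    also have "\<dots> = (\<Sum>i\<in>T. card {c\<in>E. c i \<noteq> \<zero>})"
      using fE by (intro sum.cong) (auto simp: card_filter_sum)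
    finally show ?thesis .
  qed
  have upper: "q * (\<Sum>c\<in>E. w c) \<le> (n - k + J) * ((q - 1) * N)"
  proof -
    have "q * (\<Sum>c\<in>E. w c) = (\<Sum>i\<in>T. q * card {c\<in>E. c i \<noteq> \<zero>})"
      unfolding swap by (simp add: sum_distrib_left)
    also have "\<dots> \<le> (\<Sum>i\<in>T. (q - 1) * N)" by (intro sum_mono col)
    also have "\<dots> = (n - k + J) * ((q - 1) * N)" using cT by simp
    finally show ?thesis .
  qed
  define B where "B = {c\<in>E. c \<noteq> (\<lambda>i. \<zero>) \<and> w c \<le> t}"
  have fB: "finite B" unfolding B_def using fE by simp
  show ?thesis
  proof (cases "L \<le> card B")
    case True
    then obtain B' where B': "B' \<subseteq> B" "card B' = L" by (meson obtain_subset_with_card_n)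
    have fB': "finite B'" using B'(1) fB finite_subset by blast
    have "(\<lambda>i. \<zero>) \<notin> B'" using B'(1) unfolding B_def by blast
    then have cS: "card (insert (\<lambda>i. \<zero>) B') = L + 1" using B'(2) fB' by simp
    have SC: "insert (\<lambda>i. \<zero>) B' \<subseteq> C" using B'(1) EC C_zero unfolding B_def by blast
    have "\<forall>c\<in>insert (\<lambda>i. \<zero>) B'. hamming_dist n c (\<lambda>i. \<zero>) \<le> t"
      using B'(1) unfolding B_def w_def hamming_dist_def by auto
    then show ?thesis unfolding bad_def using cS SC zero_vecs by blast
  next
    case False
    define G where "G = E - insert (\<lambda>i. \<zero>) B"
    have "card (insert (\<lambda>i. \<zero>) B) \<le> L" using False fB card_insert_le_m1
      using card_insert_le_m1[of L B] by simp
    moreover have "card E - card (insert (\<lambda>i. \<zero>) B) \<le> card G"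
      unfolding G_def using fB by (intro diff_card_le_card_Diff) simp
    ultimately have cG: "N - L \<le> card G" unfolding N_def by linarith
    have Gw: "t + 1 \<le> w c" if "c \<in> G" for c using that unfolding G_def B_def by auto
    have fG: "finite G" unfolding G_def using fE by simp
    have "(N - L) * (t + 1) \<le> card G * (t + 1)" using cG by (rule mult_right_mono) simp
    also have "\<dots> = (\<Sum>c\<in>G. t + 1)" by simp
    also have "\<dots> \<le> (\<Sum>c\<in>G. w c)" using Gw by (intro sum_mono) auto
    also have "\<dots> \<le> (\<Sum>c\<in>E. w c)" using fE unfolding G_def by (intro sum_mono2) auto
    finally have "q * ((N - L) * (t + 1)) \<le> q * (\<Sum>c\<in>E. w c)" by simp
    also have "\<dots> \<le> (n - k + J) * ((q - 1) * N)" by (rule upper)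
    finally have main: "q * ((N - L) * (t + 1)) \<le> (n - k + J) * ((q - 1) * N)" .
    have N2: "2 * L^3 \<le> N" using N0 NJ by simp
    have "1 * 1 * L \<le> L * L * L" using L by (intro mult_mono) auto
    then have "L \<le> 2 * L^3" by (simp add: power3_eq_cube)
    then have NL: "L \<le> N" using N2 by simp
    have q1: "1 \<le> q" using q_ge2 by simp
    show ?thesis using arith_b2[OF q q1 L NL N2 d J t main] by simp
  qed
qed


lemma inv_facts: assumes "b \<in> carrier R" "b \<noteq> \<zero>" shows "inv b \<in> carrier R" "b \<otimes> inv b = \<one>"
proof -
  have "b \<in> Units R" using assms field_Units by blast
  then show "inv b \<in> carrier R" "b \<otimes> inv b = \<one>" by auto
qed

lemma lam_iff0:
  assumes a: "a \<in> carrier R" and b: "b \<in> carrier R" and u: "u \<in> carrier R" "b \<otimes> u = \<one>" and l: "l \<in> carrier R"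
  shows "(a \<oplus> l \<otimes> b = \<zero>) \<longleftrightarrow> (l = \<ominus> (a \<otimes> u))"
proof
  assume h: "a \<oplus> l \<otimes> b = \<zero>"
  have "l = l \<otimes> (b \<otimes> u)" by (simp only: u(2) r_one[OF l])
  also have "\<dots> = (a \<oplus> l \<otimes> b) \<otimes> u \<ominus> a \<otimes> u" using a b u(1) l by algebra
  also have "\<dots> = \<ominus> (a \<otimes> u)" unfolding h using a u by algebra
  finally show "l = \<ominus> (a \<otimes> u)" .
next
  assume h: "l = \<ominus> (a \<otimes> u)"
  have "a \<oplus> l \<otimes> b = a \<ominus> a \<otimes> (b \<otimes> u)" unfolding h using a b u(1) by algebra
  also have "\<dots> = \<zero>" unfolding u(2) using a by algebra
  finally show "a \<oplus> l \<otimes> b = \<zero>" .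
qed

lemma lam_iff:
  assumes a: "a \<in> carrier R" and b: "b \<in> carrier R" "b \<noteq> \<zero>" and l: "l \<in> carrier R"
  shows "(a \<oplus> l \<otimes> b = \<zero>) \<longleftrightarrow> (l = \<ominus> (a \<otimes> inv b))"
  using lam_iff0[OF a b(1) inv_facts[OF b] l] .


lemma case_II:
  assumes q: "L + 1 \<le> q" and L: "1 \<le> L" and k2: "2 \<le> k"
    and dL: "L^2 \<le> n - k" and t: "L * (n - k) + 1 \<le> (L + 1) * t"
    and heavy: "\<And>c. c \<in> C \<Longrightarrow> c \<noteq> (\<lambda>i. \<zero>) \<Longrightarrow> t + 1 \<le> hamming_dist n c (\<lambda>i. \<zero>)"
  shows "bad L t"
proof -
  define d where "d = n - k"
  have kn: "k \<le> n" by (rule k_le_n)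
  have "q ^ (k - (k - 1)) \<le> card (VC (k - 1))" by (rule VC_card) simp
  then have "2 \<le> card (VC (k - 1))" using q_ge2 k2 by simp
  then have "\<not> VC (k - 1) \<subseteq> {(\<lambda>i. \<zero>)}"
  proof (intro notI)
    assume "VC (k - 1) \<subseteq> {(\<lambda>i. \<zero>)}"
    then have "card (VC (k - 1)) \<le> card {(\<lambda>i::nat. \<zero>)}" by (intro card_mono) auto
    then show False using \<open>2 \<le> card (VC (k - 1))\<close> by simp
  qed
  then obtain b where b: "b \<in> VC (k - 1)" "b \<noteq> (\<lambda>i. \<zero>)" by blast
  have bC: "b \<in> C" using b VC_sub by blast
  have b0: "b i = \<zero>" if "i < k - 1" for i using b that unfolding VC_def by simp
  define Mb where "Mb = (\<lambda>m. vsmult R n m b) ` carrier R"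
  have "card Mb \<le> q" unfolding Mb_def using fin by (rule card_image_le)
  moreover have "q ^ (k - (k - 2)) \<le> card (VC (k - 2))" by (rule VC_card) simp
  moreover have "q < q ^ 2" using q_ge2 by (simp add: power2_eq_square)
  ultimately have "card Mb < card (VC (k - 2))" using k2 by simp
  then have "\<not> VC (k - 2) \<subseteq> Mb"
  proof (intro notI)
    assume "VC (k - 2) \<subseteq> Mb"
    moreover have "finite Mb" unfolding Mb_def using fin by simp
    ultimately have "card (VC (k - 2)) \<le> card Mb" by (intro card_mono)
    then show False using \<open>card Mb < card (VC (k - 2))\<close> by simp
  qed
  then obtain a where a: "a \<in> VC (k - 2)" "a \<notin> Mb" by blast
  have aC: "a \<in> C" using a VC_sub by blast
  have a0: "a i = \<zero>" if "i < k - 2" for i using a that unfolding VC_def by simp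
  have ac: "a i \<in> carrier R" for i using aC C_carr by blast
  have bc: "b i \<in> carrier R" for i using bC C_carr by blast
  define x where "x l = vadd R n a (vsmult R n l b)" for l
  have xC: "x l \<in> C" if "l \<in> carrier R" for l unfolding x_def using aC bC that C_add C_smult by blast
  have xi: "x l i = (if i < n then a i \<oplus> l \<otimes> b i else \<zero>)" for l i unfolding x_def vadd_def vsmult_def by simp
  have x_nz: "x l \<noteq> (\<lambda>i. \<zero>)" if l: "l \<in> carrier R" for l
  proof
    assume h: "x l = (\<lambda>i. \<zero>)"
    have "a = vsmult R n (\<ominus> l) b"
    proof
      fix i show "a i = vsmult R n (\<ominus> l) b i"
      proof (cases "i < n")
        case True
        then have "a i \<oplus> l \<otimes> b i = \<zero>" using fun_cong[OF h, of i] xi by simp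
        then have "\<ominus> (l \<otimes> b i) = a i" using ac bc l by (intro minus_equality) auto
        then show ?thesis using True l bc unfolding vsmult_def by (simp add: l_minus)
      next
        case False
        have "a \<in> vecs R n" using aC C_vecs by blast
        then have "a i = \<zero>" using False vecs_ge by simp
        then show ?thesis using False unfolding vsmult_def by simp
      qed
    qed
    then have "a \<in> Mb" unfolding Mb_def using l by blast
    then show False using a(2) by blast
  qed
  define T where "T = {k - 2..<n}"
  define Z where "Z = {p\<in>T. b p = \<zero>}"
  define W where "W = {p\<in>T. b p \<noteq> \<zero>}"
  have fT: "finite T" unfolding T_def by simp
  have fW: "finite W" "finite Z" unfolding W_def Z_def using fT by auto
  have cT: "card T = d + 2" unfolding T_def d_def using kn k2 by simp
  have ZW: "card Z + card W = d + 2"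
  proof -
    have "T = Z \<union> W" "Z \<inter> W = {}" unfolding Z_def W_def by auto
    then show ?thesis using cT card_Un_disjoint[OF fW(2) fW(1)] by simp
  qed
  have kZ: "k - 2 \<in> Z" unfolding Z_def T_def using kn k2 b0[of "k - 2"] by simp
  have "Z \<noteq> {}" using kZ by blast
  then have Z1: "1 \<le> card Z" using fW(2) by (simp add: Suc_le_eq card_gt_0_iff)
  have wtb: "hamming_dist n b (\<lambda>i. \<zero>) = card W"
  proof -
    have "{i. i < n \<and> b i \<noteq> \<zero>} = W"
    proof
      show "W \<subseteq> {i. i < n \<and> b i \<noteq> \<zero>}" unfolding W_def T_def by auto
      show "{i. i < n \<and> b i \<noteq> \<zero>} \<subseteq> W"
      proof
        fix i assume i: "i \<in> {i. i < n \<and> b i \<noteq> \<zero>}"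
        then have "\<not> i < k - 1" using b0 by blast
        then show "i \<in> W" using i unfolding W_def T_def by simp
      qed
    qed
    then show ?thesis unfolding hamming_dist_def by simp
  qed
  have Wt: "t + 1 \<le> card W" using heavy[OF bC b(2)] wtb by simp
  note ar = arith_II[OF ZW Z1 Wt L t[folded d_def] dL[folded d_def]]
  define lam where "lam p = \<ominus> (a p \<otimes> inv (b p))" for p
  have WT: "W \<subseteq> T" "Z \<subseteq> T" unfolding W_def Z_def by auto
  have Tn: "p < n" if "p \<in> T" for p using that unfolding T_def by simp
  have lamc: "lam p \<in> carrier R" if "p \<in> W" for p
  proof -
    have "b p \<noteq> \<zero>" using that unfolding W_def by simp
    then have "inv (b p) \<in> carrier R" using inv_facts bc by blast
    then show ?thesis unfolding lam_def using ac by simp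
  qed
  have xlam: "(x l p = \<zero>) \<longleftrightarrow> (l = lam p)" if l: "l \<in> carrier R" and p: "p \<in> W" for l p
  proof -
    have "p < n" using p WT Tn by blast
    moreover have "b p \<noteq> \<zero>" using p unfolding W_def by simp
    ultimately show ?thesis unfolding lam_def using lam_iff[OF ac bc _ l] xi by simp
  qed
  have x0: "x l i = \<zero>" if l: "l \<in> carrier R" and i: "i < k - 2" for l i
  proof -
    have "a i = \<zero>" "b i = \<zero>" using a0 b0 i by auto
    then show ?thesis using xi l by simp
  qed
  have wx: "hamming_dist n (x l) (\<lambda>i. \<zero>) = card {p\<in>T. x l p \<noteq> \<zero>}" if l: "l \<in> carrier R" for l
  proof -
    have "{i. i < n \<and> x l i \<noteq> \<zero>} = {p\<in>T. x l p \<noteq> \<zero>}"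
    proof
      show "{p\<in>T. x l p \<noteq> \<zero>} \<subseteq> {i. i < n \<and> x l i \<noteq> \<zero>}" using Tn by auto
      show "{i. i < n \<and> x l i \<noteq> \<zero>} \<subseteq> {p\<in>T. x l p \<noteq> \<zero>}"
      proof
        fix i assume i: "i \<in> {i. i < n \<and> x l i \<noteq> \<zero>}"
        then have "\<not> i < k - 2" using x0[OF l] by blast
        then show "i \<in> {p\<in>T. x l p \<noteq> \<zero>}" using i unfolding T_def by simp
      qed
    qed
    then show ?thesis unfolding hamming_dist_def by simp
  qed
  have fib: "card {p\<in>W. lam p = l} \<le> d + 1 - t" if l: "l \<in> carrier R" for l
  proof -
    have "{p\<in>W. lam p = l} \<subseteq> {p\<in>T. x l p = \<zero>}" using xlam[OF l] WT by auto
    then have "card {p\<in>W. lam p = l} \<le> card {p\<in>T. x l p = \<zero>}" using fT by (intro card_mono) auto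
    moreover have "{p\<in>T. x l p = \<zero>} = T - {p\<in>T. x l p \<noteq> \<zero>}" by auto
    then have "card {p\<in>T. x l p = \<zero>} = card T - card {p\<in>T. x l p \<noteq> \<zero>}"
      using fT by (simp add: card_Diff_subset)
    moreover have "t + 1 \<le> card {p\<in>T. x l p \<noteq> \<zero>}" using heavy[OF xC[OF l] x_nz[OF l]] wx[OF l] by simp
    ultimately show ?thesis using cT by simp
  qed
  define Lam where "Lam = lam ` W"
  have fLam: "finite Lam" unfolding Lam_def using fW by simp
  have Lamc: "Lam \<subseteq> carrier R" unfolding Lam_def using lamc by blast
  have Weq: "W = (\<Union>l\<in>Lam. {p\<in>W. lam p = l})" unfolding Lam_def by auto
  have "card W \<le> (\<Sum>l\<in>Lam. card {p\<in>W. lam p = l})"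
    by (subst Weq) (rule card_UN_le[OF fLam])
  also have "\<dots> \<le> (\<Sum>l\<in>Lam. d + 1 - t)" using fib Lamc by (intro sum_mono) blast
  also have "\<dots> = card Lam * (d + 1 - t)" by simp
  finally have WLam: "card W \<le> card Lam * (d + 1 - t)" .
  have LamL: "L \<le> card Lam"
  proof (rule ccontr)
    assume "\<not> L \<le> card Lam"
    then have "card Lam \<le> L - 1" by simp
    then have "card Lam * (d + 1 - t) \<le> (L - 1) * (d + 1 - t)" by (rule mult_right_mono) simp
    then have "card W \<le> (L - 1) * (d + 1 - t)" using WLam by (rule le_trans[rotated])
    then show False using ar(1) by blast
  qed
  obtain Lam' where Lam': "Lam' \<subseteq> Lam" "card Lam' = L" using LamL by (meson obtain_subset_with_card_n)
  have "finite Lam'" using Lam'(1) fLam finite_subset by blast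
  then obtain mu where mu: "bij_betw mu {0..<L} Lam'" using ex_bij_betw_nat_finite Lam'(2) by metis
  have muL: "mu m \<in> Lam'" if "m < L" for m
    using mu that unfolding bij_betw_def by auto
  have muc: "mu m \<in> carrier R" "mu m \<in> Lam" if "m < L" for m
    using muL[OF that] Lam'(1) Lamc by auto
  have muinj: "mu m = mu m' \<Longrightarrow> m < L \<Longrightarrow> m' < L \<Longrightarrow> m = m'" for m m'
    using mu unfolding bij_betw_def inj_on_def by simp
  define P where "P m = inv_into W lam (mu m)" for m
  have PW: "P m \<in> W" and lamP: "lam (P m) = mu m" if "m < L" for m
    using muc(2)[OF that] unfolding P_def Lam_def by (auto intro: inv_into_into f_inv_into_f)
  define y where "y m = x (mu m)" for m
  have yC: "y m \<in> C" if "m < L" for m unfolding y_def using xC muc that by blast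
  have ynz: "y m \<noteq> (\<lambda>i. \<zero>)" if "m < L" for m unfolding y_def using x_nz muc that by blast
  have yP: "y m (P m') = \<zero> \<longleftrightarrow> m = m'" if "m < L" "m' < L" for m m'
    unfolding y_def using xlam[OF muc(1)[OF that(1)] PW[OF that(2)]] lamP[OF that(2)] muinj that by auto
  have Pinj: "inj_on P {0..<L}"
  proof (rule inj_onI)
    fix m m' assume h: "m \<in> {0..<L}" "m' \<in> {0..<L}" "P m = P m'"
    then have "mu m = mu m'" using lamP[of m] lamP[of m'] by simp
    then show "m = m'" using muinj h by simp
  qed
  define PL where "PL = P ` {0..<L}"
  have PLW: "PL \<subseteq> W" unfolding PL_def using PW by auto
  have cPL: "card PL = L" unfolding PL_def using Pinj by (simp add: card_image)
  define Rr where "Rr = W - PL"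
  have fR: "finite Rr" unfolding Rr_def using fW by simp
  have cR: "card Rr = card W - L" unfolding Rr_def using PLW fW cPL by (simp add: card_Diff_subset finite_subset)
  define rho where "rho = card W - 1 - t"
  have LR: "L * rho \<le> card Rr" unfolding rho_def cR using ar(2) .
  obtain f where f: "bij_betw f {0..<card Rr} Rr" using ex_bij_betw_nat_finite[OF fR] by blast
  have finj: "inj_on f {0..<card Rr}" and fim: "f ` {0..<card Rr} = Rr" using f unfolding bij_betw_def by auto
  define g where "g = the_inv_into {0..<card Rr} f"
  have gR: "g p < card Rr" "f (g p) = p" if "p \<in> Rr" for p
    using the_inv_into_into[OF finj, of p "{0..<card Rr}"] f_the_inv_into_f[OF finj, of p] that fim
    unfolding g_def by auto
  have gf: "g (f j) = j" if "j < card Rr" for j unfolding g_def using the_inv_into_f_f[OF finj] that by simp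
  define blk where "blk m = f ` {m * rho..<(m + 1) * rho}" for m
  have blkR: "blk m \<subseteq> Rr" and cblk: "card (blk m) = rho" if "m < L" for m
  proof -
    have "(m + 1) * rho \<le> L * rho" using that by (intro mult_right_mono) auto
    then have sub: "{m * rho..<(m + 1) * rho} \<subseteq> {0..<card Rr}" using LR by auto
    then show "blk m \<subseteq> Rr" unfolding blk_def using fim by blast
    have "inj_on f {m * rho..<(m + 1) * rho}" using finj sub by (rule inj_on_subset)
    then show "card (blk m) = rho" unfolding blk_def by (simp add: card_image algebra_simps)
  qed
  have RW: "Rr \<subseteq> W" unfolding Rr_def by auto
  define v where "v p = (if p \<in> Z then a p else if p \<in> Rr \<and> g p < L * rho then y (g p div rho) p else \<zero>)" for p
  have gdiv: "g p div rho < L" if "g p < L * rho" for p using that by (rule less_mult_imp_div_less)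
  have vv: "v \<in> vecs R n"
  proof -
    have "v i \<in> carrier R" for i
      unfolding v_def using ac yC gdiv C_carr by auto
    moreover have "v i = \<zero>" if "n \<le> i" for i
    proof -
      have "i \<notin> T" using that Tn by force
      then have "i \<notin> Z" "i \<notin> Rr" using WT RW by auto
      then show ?thesis unfolding v_def by simp
    qed
    ultimately show ?thesis unfolding vecs_def by auto
  qed
  define S where "S = insert (\<lambda>i. \<zero>) (y ` {0..<L})"
  have yinj: "inj_on y {0..<L}"
  proof (rule inj_onI)
    fix m m' assume h: "m \<in> {0..<L}" "m' \<in> {0..<L}" "y m = y m'"
    have "y m' (P m) = \<zero>" using h(3)[symmetric] yP[of m m] h by simp
    then show "m = m'" using yP[of m' m] h by simp
  qed
  have "(\<lambda>i. \<zero>) \<notin> y ` {0..<L}"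
  proof
    assume "(\<lambda>i. \<zero>) \<in> y ` {0..<L}"
    then obtain m where "m < L" "(\<lambda>i. \<zero>) = y m" by auto
    then show False using ynz[of m] by simp
  qed
  then have cS: "card S = L + 1" unfolding S_def using yinj by (simp add: card_image)
  have SC: "S \<subseteq> C" unfolding S_def using C_zero yC by auto
  have d0: "hamming_dist n (\<lambda>i. \<zero>) v \<le> t"
  proof -
    have "{i. i < n \<and> \<zero> \<noteq> v i} \<subseteq> Z \<union> f ` {0..<L * rho}"
    proof
      fix i assume i: "i \<in> {i. i < n \<and> \<zero> \<noteq> v i}"
      show "i \<in> Z \<union> f ` {0..<L * rho}"
      proof (cases "i \<in> Z")
        case False
        then have "i \<in> Rr" "g i < L * rho" using i unfolding v_def by (auto split: if_splits)
        then have "i = f (g i)" "g i \<in> {0..<L * rho}" using gR by auto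
        then show ?thesis by blast
      qed simp
    qed
    then have "card {i. i < n \<and> \<zero> \<noteq> v i} \<le> card (Z \<union> f ` {0..<L * rho})" using fW by (intro card_mono) auto
    also have "\<dots> \<le> card Z + card (f ` {0..<L * rho})" by (rule card_Un_le)
    also have "\<dots> \<le> card Z + L * rho" using card_image_le[of "{0..<L * rho}" f] by simp
    also have "\<dots> \<le> t" unfolding rho_def using ar(3) .
    finally show ?thesis unfolding hamming_dist_def .
  qed
  have dy: "hamming_dist n (y m) v \<le> t" if m: "m < L" for m
  proof -
    have "{i. i < n \<and> y m i \<noteq> v i} \<subseteq> P ` ({0..<L} - {m}) \<union> (Rr - blk m)"
    proof
      fix i assume i: "i \<in> {i. i < n \<and> y m i \<noteq> v i}"
      have ymi: "y m i = (if i < n then a i \<oplus> mu m \<otimes> b i else \<zero>)" unfolding y_def by (rule xi)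
      have iT: "i \<in> T"
      proof (rule ccontr)
        assume "i \<notin> T"
        then have "i < k - 2" using i unfolding T_def by auto
        then have "y m i = \<zero>" unfolding y_def using x0 muc m by blast
        moreover have "v i = \<zero>" using \<open>i \<notin> T\<close> WT RW unfolding v_def by auto
        ultimately show False using i by simp
      qed
      have iZ: "i \<notin> Z"
      proof
        assume iZ: "i \<in> Z"
        then have "b i = \<zero>" unfolding Z_def by simp
        then have "y m i = a i" using ymi i ac muc m by simp
        moreover have "v i = a i" using iZ unfolding v_def by simp
        ultimately show False using i by simp
      qed
      then have iW: "i \<in> W" using iT unfolding Z_def W_def by auto
      show "i \<in> P ` ({0..<L} - {m}) \<union> (Rr - blk m)"
      proof (cases "i \<in> PL")
        case True
        then obtain m' where m': "m' < L" "i = P m'" unfolding PL_def by auto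
        have "m' \<noteq> m"
        proof
          assume "m' = m"
          then have "y m i = \<zero>" using yP m m' by simp
          moreover have "i \<notin> Rr" using True unfolding Rr_def by simp
          then have "v i = \<zero>" using iZ unfolding v_def by simp
          ultimately show False using i by simp
        qed
        then show ?thesis using m' by auto
      next
        case False
        then have iR: "i \<in> Rr" using iW unfolding Rr_def by simp
        have "i \<notin> blk m"
        proof
          assume "i \<in> blk m"
          then obtain j where j: "m * rho \<le> j" "j < (m + 1) * rho" "i = f j" unfolding blk_def by auto
          have "(m + 1) * rho \<le> L * rho" using m by (intro mult_right_mono) auto
          then have jL: "j < L * rho" "j < card Rr" using j LR by auto
          have gi: "g i = j" using gf jL j by simp
          have "j div rho = m" using j by (intro div_nat_eqI) (auto simp: algebra_simps)
          then have "v i = y m i" using iZ iR gi jL unfolding v_def by simp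
          then show False using i by simp
        qed
        then show ?thesis using iR by simp
      qed
    qed
    then have "card {i. i < n \<and> y m i \<noteq> v i} \<le> card (P ` ({0..<L} - {m}) \<union> (Rr - blk m))"
      using fR by (intro card_mono) auto
    also have "\<dots> \<le> card (P ` ({0..<L} - {m})) + card (Rr - blk m)" by (rule card_Un_le)
    also have "\<dots> \<le> (L - 1) + (card Rr - rho)"
    proof -
      have "card (P ` ({0..<L} - {m})) \<le> card ({0..<L} - {m})" by (rule card_image_le) simp
      also have "\<dots> = L - 1" using m by simp
      finally have 1: "card (P ` ({0..<L} - {m})) \<le> L - 1" .
      have "card (Rr - blk m) = card Rr - rho" using blkR[OF m] cblk[OF m] fR by (simp add: card_Diff_subset finite_subset)
      then show ?thesis using 1 by simp
    qed
    also have "\<dots> \<le> t" unfolding cR rho_def using ar(4) .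
    finally show ?thesis unfolding hamming_dist_def .
  qed
  have "\<forall>c\<in>S. hamming_dist n c v \<le> t" unfolding S_def using d0 dy by auto
  then show ?thesis unfolding bad_def using cS SC vv by blast
qed


lemma main_bad:
  assumes L: "2 \<le> L" and kJ: "3 * L + 1 \<le> k" and t: "L * (n - k) + 1 \<le> (L + 1) * t"
    and alt: "n - k + L \<le> t \<or> 2 * L^2 * (3 * L + 1) \<le> n - k"
  shows "bad L t"
proof -
  define J where "J = 3 * L + 1"
  have L1: "1 \<le> L" using L by simp
  show ?thesis
  proof (cases "n - k + L \<le> t")
    case True
    have "L < 2 ^ L" by (rule less_exp)
    then have "L + 1 \<le> 2 ^ L" by (simp only: Suc_le_eq Suc_eq_plus1[symmetric])
    moreover have "L \<le> k" using kJ by simp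
    ultimately show ?thesis using case_a True by blast
  next
    case False
    then have d: "2 * L^2 * J \<le> n - k" using alt unfolding J_def by simp
    have "L^2 \<le> 2 * L^2 * J" unfolding J_def by simp
    then have dL: "L^2 \<le> n - k" using d by linarith
    show ?thesis
    proof (cases "L + 1 \<le> q")
      case True
      show ?thesis
      proof (cases "\<exists>c\<in>C. c \<noteq> (\<lambda>i. \<zero>) \<and> hamming_dist n c (\<lambda>i. \<zero>) \<le> t")
        case True
        then obtain c where "c \<in> C" "c \<noteq> (\<lambda>i. \<zero>)" "hamming_dist n c (\<lambda>i. \<zero>) \<le> t" by blast
        then show ?thesis using case_I[OF \<open>L + 1 \<le> q\<close>] by blast
      next
        case False
        then have heavy: "\<And>c. c \<in> C \<Longrightarrow> c \<noteq> (\<lambda>i. \<zero>) \<Longrightarrow> t + 1 \<le> hamming_dist n c (\<lambda>i. \<zero>)"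
          by force
        have "2 \<le> k" using kJ L by simp
        then show ?thesis using case_II[OF \<open>L + 1 \<le> q\<close> L1 _ dL t heavy] by simp
      qed
    next
      case False
      then have qL: "q \<le> L" by simp
      have "L \<le> 2 ^ L" using less_exp[of L] by simp
      then have "L ^ 3 \<le> (2 ^ L) ^ 3" by (rule power_mono) simp
      also have "\<dots> = 2 ^ (3 * L)" by (simp add: power_mult[symmetric] mult.commute)
      finally have N0: "2 * L ^ 3 \<le> 2 ^ J" unfolding J_def by simp
      have "1 \<le> J" unfolding J_def by simp
      then show ?thesis using case_b2[OF qL _ L1 N0 d _ t] kJ unfolding J_def by simp
    qed
  qed
qed

end

lemma final_one:
  fixes L :: nat and r :: real and F :: "nat ring"
  assumes L: "L \<ge> 2" and r0: "0 \<le> r" and rL: "r < real L / (real L + 1)"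
    and fld: "field F" and fin: "finite (carrier F)"
    and n0: "real n \<ge> (real (2 * L^2 * (3 * L + 1) + L)) / r + real (3 * L + 1) / (1 - (real L + 1) / real L * r)"
    and m: "r * real n = real m" and lc: "linear_code F n k C" and ld: "list_decodable F n r L C"
  shows "int k \<le> int n - \<lceil>(real L + 1) / real L * r * real n\<rceil>"
proof (rule ccontr)
  assume contra: "\<not> ?thesis"
  interpret lcode F n k C unfolding lcode_def lcode_axioms_def using fld fin lc by simp
  have kn: "k \<le> n" by (rule k_le_n)
  define d where "d = n - k"
  define J where "J = 3 * L + 1"
  define D0 where "D0 = 2 * L^2 * (3 * L + 1)"
  have Lpos: "real L > 0" using L by simp
  have "int d < \<lceil>(real L + 1) / real L * r * real n\<rceil>" using contra kn unfolding d_def by (simp add: of_nat_diff)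
  then have dlt: "real d < (real L + 1) / real L * real m" unfolding less_ceiling_iff using m
    by (simp add: mult.assoc)
  then have "real L * real d < (real L + 1) * real m" using Lpos by (simp add: field_simps)
  then have "real (L * d) < real ((L + 1) * m)" by (simp add: algebra_simps)
  then have "L * d < (L + 1) * m" by (simp only: of_nat_less_iff)
  then have t: "L * (n - k) + 1 \<le> (L + 1) * m" unfolding d_def by simp
  have rpos: "r > 0"
  proof (rule ccontr)
    assume "\<not> r > 0"
    then have "r = 0" using r0 by simp
    then have "m = 0" using m by simp
    then show False using t by simp
  qed
  define eps where "eps = 1 - (real L + 1) / real L * r"
  have epos: "eps > 0"
  proof -
    have "(real L + 1) / real L * r < (real L + 1) / real L * (real L / (real L + 1))"
      using rL Lpos by (intro mult_strict_left_mono) auto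
    also have "\<dots> = 1"
    proof -
      have "real L + 1 \<noteq> 0" "real L \<noteq> 0" using Lpos by auto
      then show ?thesis by simp
    qed
    finally show ?thesis unfolding eps_def by simp
  qed
  have n1: "real n \<ge> real (D0 + L) / r" using n0 epos unfolding D0_def eps_def
    by (smt (verit) divide_nonneg_pos of_nat_0_le_iff)
  have n2: "real n \<ge> real J / eps" using n0 rpos unfolding J_def eps_def
    by (smt (verit) divide_nonneg_pos of_nat_0_le_iff)
  have "real (D0 + L) \<le> r * real n" using n1 rpos by (simp add: field_simps)
  then have tD: "D0 + L \<le> m" using m by simp
  have "real J \<le> eps * real n" using n2 epos by (simp add: field_simps)
  also have "\<dots> = real n - (real L + 1) / real L * real m" unfolding eps_def using m by (simp add: algebra_simps)
  also have "\<dots> < real n - real d" using dlt by simp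
  also have "\<dots> = real k" unfolding d_def using kn by (simp add: of_nat_diff)
  finally have kJ: "3 * L + 1 \<le> k" unfolding J_def by simp
  have alt: "n - k + L \<le> m \<or> 2 * L^2 * (3 * L + 1) \<le> n - k" using tD unfolding D0_def by linarith
  have "bad L m" using main_bad[OF L kJ t alt] .
  moreover have "real m \<le> r * real n" using m by simp
  ultimately have "\<not> list_decodable F n r L C" by (rule bad_not_ld)
  then show False using ld by simp
qed

theorem proposition3p6:
  fixes L :: nat and r :: real
  assumes "L \<ge> 2" and "0 \<le> r" and "r < real L / (real L + 1)"
  shows "\<exists>n0::nat. \<forall>(F :: nat ring) n k C.
           field F \<longrightarrow> finite (carrier F) \<longrightarrow> n \<ge> n0 \<longrightarrow>
           (\<exists>m::nat. r * real n = real m) \<longrightarrow>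
           linear_code F n k C \<longrightarrow> list_decodable F n r L C \<longrightarrow>
           int k \<le> int n - \<lceil>(real L + 1) / real L * r * real n\<rceil>"
proof -
  define B where "B = (real (2 * L^2 * (3 * L + 1) + L)) / r + real (3 * L + 1) / (1 - (real L + 1) / real L * r)"
  show ?thesis
  proof (intro exI[of _ "nat \<lceil>B\<rceil>"] allI impI)
    fix F :: "nat ring" and n k C
    assume h: "field F" "finite (carrier F)" "nat \<lceil>B\<rceil> \<le> n" "\<exists>m::nat. r * real n = real m"
      "linear_code F n k C" "list_decodable F n r L C"
    obtain m :: nat where m: "r * real n = real m" using h(4) by blast
    have "B \<le> real n" using h(3) real_nat_ceiling_ge[of B] by linarith
    then show "int k \<le> int n - \<lceil>(real L + 1) / real L * r * real n\<rceil>"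
      using final_one[OF assms h(1) h(2) _ m h(5) h(6)] unfolding B_def by simp
  qed
qed

end
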